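(* Suppose $\sigma$ is an automorphism of $D$ and $a\in D$. Then $f(t)=t^4-a\in D[t;\sigma]$ is reducible if and only if there exist $c,d\in D$ with $$\sigma^2(c)\sigma(c)c+\sigma^2(d)c+\sigma^2(c)\sigma(d)=0\quad\text{and}\quad \sigma^2(d)d+\sigma^2(c)\sigma(c)d=a.$$
   Context: $D$ is an associative division ring, $\sigma$ a ring automorphism of $D$, and $D[t;\sigma]$ the skew polynomial ring with $ta=\sigma(a)t$. $f$ is reducible if it can be written $f=gh$ with $\deg g,\deg h<\deg f$. *)

theory Defs
  imports "HOL-Computational_Algebra.Polynomial"
begin

definition ring_automorphism :: "('a::division_ring \<Rightarrow> 'a) \<Rightarrow> bool" where
  "ring_automorphism \<sigma> \<longleftrightarrow> bij \<sigma> \<and> (\<forall>x y. \<sigma> (x + y) = \<sigma> x + \<sigma> y)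
     \<and> (\<forall>x y. \<sigma> (x * y) = \<sigma> x * \<sigma> y) \<and> \<sigma> 1 = 1"

text \<open>Skew polynomials in D[t;sigma] are represented by their coefficient lists
  (type 'a poly, coefficient i is the coefficient of t^i, written on the left).
  Multiplication follows t b = sigma(b) t, i.e.
  (a t^i)(b t^j) = a sigma^i(b) t^(i+j).\<close>
definition skew_mult :: "('a::division_ring \<Rightarrow> 'a) \<Rightarrow> 'a poly \<Rightarrow> 'a poly \<Rightarrow> 'a poly" where
  "skew_mult \<sigma> p q =
     (\<Sum>i\<le>degree p. \<Sum>j\<le>degree q. monom (coeff p i * (\<sigma> ^^ i) (coeff q j)) (i + j))"

definition skew_reducible :: "('a::division_ring \<Rightarrow> 'a) \<Rightarrow> 'a poly \<Rightarrow> bool" where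
  "skew_reducible \<sigma> f \<longleftrightarrow>
     (\<exists>g h. degree g < degree f \<and> degree h < degree f \<and> f = skew_mult \<sigma> g h)"

end

theory Submission
  imports Defs
begin

locale aut = fixes \<sigma> :: "'a::division_ring \<Rightarrow> 'a"
  assumes A: "ring_automorphism \<sigma>"
begin

lemma add: "\<sigma> (x + y) = \<sigma> x + \<sigma> y" and mul: "\<sigma> (x * y) = \<sigma> x * \<sigma> y"
  and one: "\<sigma> 1 = 1" and inj: "inj \<sigma>"
  using A unfolding ring_automorphism_def bij_def by auto

lemma zero[simp]: "\<sigma> 0 = 0"
  using add[of 0 0] by simp

lemma neg[simp]: "\<sigma> (- x) = - \<sigma> x"
  using add[of x "-x"] by (simp add: add_eq_0_iff2)

lemma eq0[simp]: "\<sigma> x = 0 \<longleftrightarrow> x = 0"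
  using inj zero by (metis injD)

lemma inv[simp]: "\<sigma> (inverse x) = inverse (\<sigma> x)"
proof (cases "x = 0")
  case False
  have "\<sigma> x * \<sigma> (inverse x) = 1" using mul[of x "inverse x"] False one by simp
  then show ?thesis by (metis inverse_unique)
qed simp

lemma funpow0[simp]: "(\<sigma> ^^ i) 0 = 0"
  by (induction i) auto

lemma zsum: assumes "0 = x + y" shows "y = - (x::'b::ab_group_add)"
proof -
  have "x + y = 0" by (rule sym) (rule assms)
  then show ?thesis by (simp only: add_eq_0_iff)
qed

lemma zsum2: assumes "0 = x + y" shows "x = - (y::'b::ab_group_add)"
proof -
  have "x + y = 0" by (rule sym) (rule assms)
  then show ?thesis by (simp only: add_eq_0_iff2)
qed

lemma zsum3: assumes "0 = x + y" "y = - z" shows "x = (z::'b::ab_group_add)"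
  using zsum2[OF assms(1)] assms(2) by simp

lemma coeff_skew:
  assumes "degree p \<le> M" "degree q \<le> N"
  shows "coeff (skew_mult \<sigma> p q) n =
    (\<Sum>i\<le>M. \<Sum>j\<le>N. if i + j = n then coeff p i * (\<sigma> ^^ i) (coeff q j) else 0)"
proof -
  have "skew_mult \<sigma> p q =
     (\<Sum>i\<le>M. \<Sum>j\<le>N. monom (coeff p i * (\<sigma> ^^ i) (coeff q j)) (i + j))"
  proof -
    have "skew_mult \<sigma> p q = (\<Sum>i\<le>M. \<Sum>j\<le>degree q. monom (coeff p i * (\<sigma> ^^ i) (coeff q j)) (i + j))"
      unfolding skew_mult_def
      by (rule sum.mono_neutral_left) (use assms in \<open>auto simp: coeff_eq_0\<close>)
    also have "\<dots> = (\<Sum>i\<le>M. \<Sum>j\<le>N. monom (coeff p i * (\<sigma> ^^ i) (coeff q j)) (i + j))"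
      by (rule sum.cong[OF refl], rule sum.mono_neutral_left) (use assms in \<open>auto simp: coeff_eq_0\<close>)
    finally show ?thesis .
  qed
  then show ?thesis by (simp add: coeff_sum coeff_monom)
qed

lemma coeff_c: "coeff [:a:] n = (if n = 0 then a else 0)"
  by (cases n) auto

lemma coeff_f: "coeff (monom 1 4 - [:a::'a:]) n = (if n = 4 then 1 else 0) - (if n = 0 then a else 0)"
  by (cases n) (auto simp: coeff_monom)

lemma degree_f: "degree (monom 1 4 - [:a::'a:]) = 4"
proof (rule antisym)
  show "degree (monom 1 4 - [:a:]) \<le> 4"
    by (rule degree_le) (intro allI impI, subst coeff_f, simp)
  show "4 \<le> degree (monom 1 4 - [:a:])"
    by (rule le_degree) (simp add: coeff_f coeff_c)
qed

lemma if_dir: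
  assumes "\<sigma> (\<sigma> c) * \<sigma> c * c + \<sigma> (\<sigma> d) * c + \<sigma> (\<sigma> c) * \<sigma> d = 0"
      and "\<sigma> (\<sigma> d) * d + \<sigma> (\<sigma> c) * \<sigma> c * d = a"
  shows "skew_reducible \<sigma> (monom 1 4 - [:a:])"
proof -
  define g where "g = [:\<sigma> (\<sigma> d) + \<sigma> (\<sigma> c) * \<sigma> c, \<sigma> (\<sigma> c), 1:]"
  define h where "h = [:-d, -c, 1:]"
  have dg: "degree g = 2" "degree h = 2" by (simp_all add: g_def h_def)
  have e: "skew_mult \<sigma> g h = monom 1 4 - [:a:]"
  proof (rule poly_eqI)
    fix n
    have "coeff (skew_mult \<sigma> g h) n =
      (\<Sum>i\<le>2. \<Sum>j\<le>2. if i + j = n then coeff g i * (\<sigma> ^^ i) (coeff h j) else 0)"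
      by (rule coeff_skew) (simp_all add: dg)
    also have "\<dots> = coeff (monom 1 4 - [:a:]) n"
    proof -
      consider "n = 0" | "n = 1" | "n = 2" | "n = 3" | "n = 4" | "n \<ge> 5" by linarith
      then show ?thesis
      proof cases
        case 1 then show ?thesis using assms(2)
          by (simp add: coeff_f g_def h_def numeral_eq_Suc algebra_simps mul add one coeff_c)
      next
        case 2 then show ?thesis using assms(1)
          by (simp add: coeff_f g_def h_def numeral_eq_Suc algebra_simps mul add neg_eq_iff_add_eq_0)
      next
        case 3 then show ?thesis
          by (simp add: coeff_f g_def h_def numeral_eq_Suc algebra_simps mul add one coeff_c)
      next
        case 4 then show ?thesis
          by (simp add: coeff_f g_def h_def numeral_eq_Suc algebra_simps mul add one coeff_c)
      next
        case 5 then show ?thesis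
          by (simp add: coeff_f g_def h_def numeral_eq_Suc algebra_simps mul add one coeff_c)
      next
        case 6 then show ?thesis
          by (simp add: coeff_f g_def h_def numeral_eq_Suc algebra_simps mul add one coeff_c)
      qed
    qed
    finally show "coeff (skew_mult \<sigma> g h) n = coeff (monom 1 4 - [:a:]) n" .
  qed
  show ?thesis unfolding skew_reducible_def degree_f
    apply (rule exI[where x=g], rule exI[where x=h]) using e dg by simp
qed

lemma case22:
  assumes h2: "h2 \<noteq> 0"
   and E4: "1 = g2 * \<sigma> (\<sigma> h2)"
   and E3: "0 = g1 * \<sigma> h2 + g2 * \<sigma> (\<sigma> h1)"
   and E2: "0 = g0 * h2 + g1 * \<sigma> h1 + g2 * \<sigma> (\<sigma> h0)"
   and E1: "0 = g0 * h1 + g1 * \<sigma> h0"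
   and E0: "- a = g0 * h0"
  shows "\<exists>c d. \<sigma> (\<sigma> c) * \<sigma> c * c + \<sigma> (\<sigma> d) * c + \<sigma> (\<sigma> c) * \<sigma> d = 0
         \<and> \<sigma> (\<sigma> d) * d + \<sigma> (\<sigma> c) * \<sigma> c * d = a"
proof -
  define c where "c = - (inverse h2 * h1)"
  define d where "d = - (inverse h2 * h0)"
  have hc: "h1 = - (h2 * c)" using h2 by (simp add: c_def mult.assoc[symmetric])
  have hd: "h0 = - (h2 * d)" using h2 by (simp add: d_def mult.assoc[symmetric])
  have s2: "g2 * \<sigma> (\<sigma> h1) = - \<sigma> (\<sigma> c)"
    by (simp add: hc mul mult.assoc[symmetric] E4[symmetric])
  have G1: "g1 * \<sigma> h2 = \<sigma> (\<sigma> c)"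
    using E3 s2 by (rule zsum3)
  have s3: "g1 * \<sigma> h1 = - (\<sigma> (\<sigma> c) * \<sigma> c)"
    by (simp add: hc mul mult.assoc[symmetric] G1)
  have s4: "g2 * \<sigma> (\<sigma> h0) = - \<sigma> (\<sigma> d)"
    by (simp add: hd mul mult.assoc[symmetric] E4[symmetric])
  have G0: "g0 * h2 = \<sigma> (\<sigma> c) * \<sigma> c + \<sigma> (\<sigma> d)"
  proof -
    have "g0 * h2 - (\<sigma> (\<sigma> c) * \<sigma> c + \<sigma> (\<sigma> d)) = 0"
      using E2[symmetric] s3 s4 by (simp add: algebra_simps)
    then show ?thesis by simp
  qed
  have s5: "g0 * h1 = - ((\<sigma> (\<sigma> c) * \<sigma> c + \<sigma> (\<sigma> d)) * c)"
    by (simp add: hc mult.assoc[symmetric] G0)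
  have s6: "g1 * \<sigma> h0 = - (\<sigma> (\<sigma> c) * \<sigma> d)"
    by (simp add: hd mul mult.assoc[symmetric] G1)
  have s7: "g0 * h0 = - ((\<sigma> (\<sigma> c) * \<sigma> c + \<sigma> (\<sigma> d)) * d)"
    by (simp add: hd mult.assoc[symmetric] G0)
  have "\<sigma> (\<sigma> c) * \<sigma> c * c + \<sigma> (\<sigma> d) * c + \<sigma> (\<sigma> c) * \<sigma> d = 0"
  proof -
    have "0 = - ((\<sigma> (\<sigma> c) * \<sigma> c + \<sigma> (\<sigma> d)) * c) + - (\<sigma> (\<sigma> c) * \<sigma> d)"
      using E1 s5 s6 by metis
    then have "(\<sigma> (\<sigma> c) * \<sigma> c + \<sigma> (\<sigma> d)) * c + \<sigma> (\<sigma> c) * \<sigma> d = 0"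
      by (metis minus_add_distrib neg_0_equal_iff_equal)
    then show ?thesis by (simp add: distrib_right)
  qed
  moreover have "\<sigma> (\<sigma> d) * d + \<sigma> (\<sigma> c) * \<sigma> c * d = a"
  proof -
    have "(\<sigma> (\<sigma> c) * \<sigma> c + \<sigma> (\<sigma> d)) * d = a" using E0 s7 by (metis neg_equal_iff_equal)
    then show ?thesis by (simp add: distrib_right add.commute)
  qed
  ultimately show ?thesis by blast
qed

lemma case13:
  assumes a: "a \<noteq> 0"
   and E4: "1 = g1 * \<sigma> h3"
   and E3: "0 = g0 * h3 + g1 * \<sigma> h2"
   and E2: "0 = g0 * h2 + g1 * \<sigma> h1"
   and E1: "0 = g0 * h1 + g1 * \<sigma> h0"
   and E0: "- a = g0 * h0"
  shows "\<exists>c d. \<sigma> (\<sigma> c) * \<sigma> c * c + \<sigma> (\<sigma> d) * c + \<sigma> (\<sigma> c) * \<sigma> d = 0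
         \<and> \<sigma> (\<sigma> d) * d + \<sigma> (\<sigma> c) * \<sigma> c * d = a"
proof -
  have g1: "g1 \<noteq> 0" proof assume "g1 = 0" with E4 show False by simp qed
  have h3: "h3 \<noteq> 0" proof assume "h3 = 0" with E4 show False by simp qed
  have g0: "g0 \<noteq> 0" proof assume "g0 = 0" with E0 a show False by simp qed
  define k where "k = - (inverse g1 * g0)"
  have k: "k \<noteq> 0" using g0 g1 by (simp add: k_def)
  have r: "\<sigma> x = k * y" if "0 = g0 * y + g1 * \<sigma> x" for x y
  proof -
    have "g1 * \<sigma> x = - (g0 * y)" using zsum[OF that] .
    then have "inverse g1 * (g1 * \<sigma> x) = inverse g1 * - (g0 * y)" by simp
    then show ?thesis using g1 by (simp add: k_def mult.assoc[symmetric])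
  qed
  have r0: "\<sigma> h0 = k * h1" using r E1 by blast
  have r1: "\<sigma> h1 = k * h2" using r E2 by blast
  have r2: "\<sigma> h2 = k * h3" using r E3 by blast
  have r3: "\<sigma> h3 = inverse g1" using E4 g1 by (metis inverse_unique)
  have h2: "h2 \<noteq> 0" using r2 k h3 by (metis eq0 no_zero_divisors)
  define d where "d = inverse h2 * h0"
  have "\<sigma> (\<sigma> h0) = \<sigma> k * k * h2" by (simp add: r0 mul r1 mult.assoc)
  moreover have "\<sigma> (\<sigma> h2) = \<sigma> k * inverse g1" by (simp add: r2 mul r3)
  ultimately have "\<sigma> (\<sigma> d) * d = inverse (\<sigma> k * inverse g1) * (\<sigma> k * k * h2) * (inverse h2 * h0)"
    by (simp add: d_def mul mult.assoc)
  also have "\<dots> = g1 * k * h0"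
  proof -
    have i: "inverse (\<sigma> k * inverse g1) = g1 * inverse (\<sigma> k)"
      using k g1 by (simp add: nonzero_inverse_mult_distrib)
    have "h2 * (inverse h2 * h0) = h0" using h2 by (simp add: mult.assoc[symmetric])
    moreover have "inverse (\<sigma> k) * (\<sigma> k * (k * h0)) = k * h0"
      using k by (simp add: mult.assoc[symmetric])
    ultimately show ?thesis by (simp add: i mult.assoc)
  qed
  also have "\<dots> = a" using g1 E0[symmetric] by (simp add: k_def mult.assoc[symmetric])
  finally have "\<sigma> (\<sigma> d) * d = a" .
  then show ?thesis by (intro exI[of _ 0] exI[of _ d]) simp
qed

lemma case31:
  assumes h1: "h1 \<noteq> 0"
   and E4: "1 = g3 * \<sigma> (\<sigma> (\<sigma> h1))"
   and E3: "0 = g2 * \<sigma> (\<sigma> h1) + g3 * \<sigma> (\<sigma> (\<sigma> h0))"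
   and E2: "0 = g1 * \<sigma> h1 + g2 * \<sigma> (\<sigma> h0)"
   and E1: "0 = g0 * h1 + g1 * \<sigma> h0"
   and E0: "- a = g0 * h0"
  shows "\<exists>c d. \<sigma> (\<sigma> c) * \<sigma> c * c + \<sigma> (\<sigma> d) * c + \<sigma> (\<sigma> c) * \<sigma> d = 0
         \<and> \<sigma> (\<sigma> d) * d + \<sigma> (\<sigma> c) * \<sigma> c * d = a"
proof -
  define b where "b = - (inverse h1 * h0)"
  have hb: "h0 = - (h1 * b)" using h1 by (simp add: b_def mult.assoc[symmetric])
  have "g3 * \<sigma> (\<sigma> (\<sigma> h0)) = - \<sigma> (\<sigma> (\<sigma> b))"
    by (simp add: hb mul mult.assoc[symmetric] E4[symmetric])
  note pt2 = this
  have t2: "g2 * \<sigma> (\<sigma> h1) = \<sigma> (\<sigma> (\<sigma> b))" using E3 pt2 by (rule zsum3)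
  have "g2 * \<sigma> (\<sigma> h0) = - (\<sigma> (\<sigma> (\<sigma> b)) * \<sigma> (\<sigma> b))"
    by (simp add: hb mul mult.assoc[symmetric] t2)
  note pt1 = this
  have t1: "g1 * \<sigma> h1 = \<sigma> (\<sigma> (\<sigma> b)) * \<sigma> (\<sigma> b)" using E2 pt1 by (rule zsum3)
  have "g1 * \<sigma> h0 = - (\<sigma> (\<sigma> (\<sigma> b)) * \<sigma> (\<sigma> b) * \<sigma> b)"
    by (simp add: hb mul mult.assoc[symmetric] t1)
  note pt0 = this
  have t0: "g0 * h1 = \<sigma> (\<sigma> (\<sigma> b)) * \<sigma> (\<sigma> b) * \<sigma> b" using E1 pt0 by (rule zsum3)
  have "a = g0 * h1 * b" using E0 by (simp add: hb mult.assoc[symmetric])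
  then have "\<sigma> (\<sigma> (\<sigma> b * b)) * (\<sigma> b * b) = a" by (simp add: t0 mul mult.assoc)
  then show ?thesis by (intro exI[of _ 0] exI[of _ "\<sigma> b * b"]) simp
qed

lemma only_if_dir:
  assumes "skew_reducible \<sigma> (monom 1 4 - [:a:])"
  shows "\<exists>c d. \<sigma> (\<sigma> c) * \<sigma> c * c + \<sigma> (\<sigma> d) * c + \<sigma> (\<sigma> c) * \<sigma> d = 0
         \<and> \<sigma> (\<sigma> d) * d + \<sigma> (\<sigma> c) * \<sigma> c * d = a"
proof (cases "a = 0")
  case True then show ?thesis by (intro exI[of _ 0]) simp
next
  case False
  from assms obtain g h where dg: "degree g < 4" "degree h < 4"
    and e: "monom 1 4 - [:a:] = skew_mult \<sigma> g h"
    unfolding skew_reducible_def degree_f by blast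
  have E: "(if n = 4 then 1 else 0) - (if n = 0 then a else 0) =
     (\<Sum>i\<le>3. \<Sum>j\<le>3. if i + j = n then coeff g i * (\<sigma> ^^ i) (coeff h j) else 0)" for n
    using coeff_skew[of g 3 h 3 n] dg e coeff_f[of a n] by simp
  have E0: "- a = coeff g 0 * coeff h 0" using E[of 0] by (simp add: numeral_eq_Suc)
  have E1: "0 = coeff g 0 * coeff h 1 + coeff g 1 * \<sigma> (coeff h 0)" using E[of 1] by (simp add: numeral_eq_Suc)
  have E2: "0 = coeff g 0 * coeff h 2 + coeff g 1 * \<sigma> (coeff h 1) + coeff g 2 * \<sigma> (\<sigma> (coeff h 0))" using E[of 2] by (simp add: numeral_eq_Suc)
  have E3: "0 = coeff g 0 * coeff h 3 + coeff g 1 * \<sigma> (coeff h 2) + coeff g 2 * \<sigma> (\<sigma> (coeff h 1)) + coeff g 3 * \<sigma> (\<sigma> (\<sigma> (coeff h 0)))" using E[of 3] by (simp add: numeral_eq_Suc)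
  have E4: "1 = coeff g 1 * \<sigma> (coeff h 3) + coeff g 2 * \<sigma> (\<sigma> (coeff h 2)) + coeff g 3 * \<sigma> (\<sigma> (\<sigma> (coeff h 1)))" using E[of 4] by (simp add: numeral_eq_Suc)
  have E5: "0 = coeff g 2 * \<sigma> (\<sigma> (coeff h 3)) + coeff g 3 * \<sigma> (\<sigma> (\<sigma> (coeff h 2)))" using E[of 5] by (simp add: numeral_eq_Suc)
  have E6: "0 = coeff g 3 * \<sigma> (\<sigma> (\<sigma> (coeff h 3)))" using E[of 6] by (simp add: numeral_eq_Suc)
  have gz: "coeff g i = 0" if "degree g < i" for i using that by (simp add: coeff_eq_0)
  have hz: "coeff h i = 0" if "degree h < i" for i using that by (simp add: coeff_eq_0)
  have glc: "coeff g (degree g) \<noteq> 0" if "0 < degree g" using that by auto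
  have hlc: "coeff h (degree h) \<noteq> 0" if "0 < degree h" using that by auto
  have dgs: "degree g = 0 \<or> degree g = 1 \<or> degree g = 2 \<or> degree g = 3" using dg by auto
  have dhs: "degree h = 0 \<or> degree h = 1 \<or> degree h = 2 \<or> degree h = 3" using dg by auto
  have key: "degree g = 2 \<and> degree h = 2 \<or> degree g = 1 \<and> degree h = 3 \<or> degree g = 3 \<and> degree h = 1"
    using dgs dhs E4 E5 E6 gz[of 1] gz[of 2] gz[of 3] hz[of 1] hz[of 2] hz[of 3] glc hlc
    by (elim disjE; simp)
  show ?thesis using key
  proof (elim disjE conjE)
    assume "degree g = 2" "degree h = 2"
    then show ?thesis using E0 E1 E2 E3 E4 gz[of 3] hz[of 3] hlc
      by (intro case22[of "coeff h 2" "coeff g 2" "coeff g 1" "coeff h 1" "coeff g 0" "coeff h 0"]) simp_all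
  next
    assume "degree g = 1" "degree h = 3"
    then show ?thesis using E0 E1 E2 E3 E4 gz[of 3] gz[of 2] False
      by (intro case13[of a "coeff g 1" "coeff h 3" "coeff g 0" "coeff h 2" "coeff h 1" "coeff h 0"]) simp_all
  next
    assume "degree g = 3" "degree h = 1"
    then show ?thesis using E0 E1 E2 E3 E4 hz[of 3] hz[of 2] hlc
      by (intro case31[of "coeff h 1" "coeff g 3" "coeff g 2" "coeff h 0" "coeff g 1" "coeff g 0"]) simp_all
  qed
qed

end

theorem mainTheorem16:
  fixes \<sigma> :: "'a::division_ring \<Rightarrow> 'a" and a :: 'a
  assumes "ring_automorphism \<sigma>"
  shows "skew_reducible \<sigma> (monom 1 4 - [:a:]) \<longleftrightarrow>
    (\<exists>c d. \<sigma> (\<sigma> c) * \<sigma> c * c + \<sigma> (\<sigma> d) * c + \<sigma> (\<sigma> c) * \<sigma> d = 0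
         \<and> \<sigma> (\<sigma> d) * d + \<sigma> (\<sigma> c) * \<sigma> c * d = a)"
proof -
  interpret aut \<sigma> by unfold_locales (rule assms)
  show ?thesis using if_dir only_if_dir by blast
qed

end
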